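(* Let $d\in\mathbb N$ and let $S$ be a semigroup with a completely simple ideal $K$. (1) If $S$ is $d$-solvable, then $S^{2^d}=K$ and all subgroups of $K$ are $d$-solvable. (2) If $S$ is left $d$-nilpotent or right $d$-nilpotent or $d$-supernilpotent, then $S^{d+1}=K$ and all subgroups of $K$ are $d$-nilpotent.
   Context: $S^m=\{a_1\cdots a_m: a_i\in S\}$. For an algebra $\mathbf A$ and congruences $\alpha_1,\dots,\alpha_n$, $M_{\mathbf A}(\alpha_1,\dots,\alpha_n)$ is the subalgebra of $\mathbf A^{\{0,1\}^n}$ generated by all $g$ such that for some $i$ and $(a,b)\in\alpha_i$, $g(x)=a$ if $x_i=0$ and $g(x)=b$ if $x_i=1$; $[\alpha_1,\dots,\alpha_n]$ is the smallest congruence $\delta$ such that for all $f\in M_{\mathbf A}(\alpha_1,\dots,\alpha_n)$: if $(f(x0),f(x1))\in\delta$ for all $x\in\{0,1\}^{n-1}\setminus\{(1,\dots,1)\}$ then $(f(1,\dots,1,0),f(1,\dots,1,1))\in\delta$. With $1$ total, $0$ trivial congruence: $[1]^0=1$, $[1]^{k+1}=[[1]^k,[1]^k]$; $(1]^1=1$, $(1]^{k+1}=[1,(1]^k]$; $[1)^1=1$, $[1)^{k+1}=[[1)^k,1]$. $d$-solvable: $[1]^d=0$; left $d$-nilpotent: $(1]^{d+1}=0$; right $d$-nilpotent: $[1)^{d+1}=0$; $d$-supernilpotent: the $(d+1)$-ary $[1,\dots,1]=0$. For groups, $d$-solvable and $d$-nilpotent are in the classical sense (derived length, resp. nilpotency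 class at most $d$). *)

theory Defs
  imports "HOL-Algebra.Solvable_Groups"
begin

definition is_semigroup :: "'a set \<Rightarrow> ('a \<Rightarrow> 'a \<Rightarrow> 'a) \<Rightarrow> bool" where
  "is_semigroup S m \<longleftrightarrow> (\<forall>a\<in>S. \<forall>b\<in>S. m a b \<in> S) \<and>
     (\<forall>a\<in>S. \<forall>b\<in>S. \<forall>c\<in>S. m (m a b) c = m a (m b c))"

fun lprod :: "('a \<Rightarrow> 'a \<Rightarrow> 'a) \<Rightarrow> 'a list \<Rightarrow> 'a" where
  "lprod m [x] = x"
| "lprod m (x # y # xs) = m x (lprod m (y # xs))"
| "lprod m [] = undefined"

definition spow :: "'a set \<Rightarrow> ('a \<Rightarrow> 'a \<Rightarrow> 'a) \<Rightarrow> nat \<Rightarrow> 'a set" where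
  "spow S m k = {lprod m xs | xs. length xs = k \<and> set xs \<subseteq> S}"

definition is_ideal :: "'a set \<Rightarrow> ('a \<Rightarrow> 'a \<Rightarrow> 'a) \<Rightarrow> 'a set \<Rightarrow> bool" where
  "is_ideal S m I \<longleftrightarrow> I \<noteq> {} \<and> I \<subseteq> S \<and> (\<forall>s\<in>S. \<forall>a\<in>I. m s a \<in> I \<and> m a s \<in> I)"

definition simple_sg :: "'a set \<Rightarrow> ('a \<Rightarrow> 'a \<Rightarrow> 'a) \<Rightarrow> bool" where
  "simple_sg K m \<longleftrightarrow> (\<forall>I. is_ideal K m I \<longrightarrow> I = K)"

definition primitive_idempotent :: "'a set \<Rightarrow> ('a \<Rightarrow> 'a \<Rightarrow> 'a) \<Rightarrow> 'a \<Rightarrow> bool" where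
  "primitive_idempotent K m e \<longleftrightarrow> e \<in> K \<and> m e e = e \<and>
     (\<forall>f\<in>K. m f f = f \<and> m e f = f \<and> m f e = f \<longrightarrow> f = e)"

definition completely_simple :: "'a set \<Rightarrow> ('a \<Rightarrow> 'a \<Rightarrow> 'a) \<Rightarrow> bool" where
  "completely_simple K m \<longleftrightarrow> is_semigroup K m \<and> K \<noteq> {} \<and> simple_sg K m \<and>
     (\<exists>e. primitive_idempotent K m e)"

definition sg_subgroup :: "'a set \<Rightarrow> ('a \<Rightarrow> 'a \<Rightarrow> 'a) \<Rightarrow> 'a monoid \<Rightarrow> bool" where
  "sg_subgroup K m G \<longleftrightarrow> carrier G \<subseteq> K \<and> mult G = m \<and> group G"

definition is_congruence :: "'a set \<Rightarrow> ('a \<Rightarrow> 'a \<Rightarrow> 'a) \<Rightarrow> 'a rel \<Rightarrow> bool" where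
  "is_congruence S m \<theta> \<longleftrightarrow> equiv S \<theta> \<and>
     (\<forall>a b c d. (a, b) \<in> \<theta> \<longrightarrow> (c, d) \<in> \<theta> \<longrightarrow> (m a c, m b d) \<in> \<theta>)"

abbreviation total_cong :: "'a set \<Rightarrow> 'a rel" where "total_cong S \<equiv> S \<times> S"
abbreviation trivial_cong :: "'a set \<Rightarrow> 'a rel" where "trivial_cong S \<equiv> Id_on S"

text \<open>M_A(alpha_1,...,alpha_n), with alpha given as a list of length n, coordinates indexed
  0..n-1. Elements of A^{{0,1}^n} are represented as functions on bool lists; only the values on
  lists of length n matter.\<close>
inductive_set M_alg :: "'a set \<Rightarrow> ('a \<Rightarrow> 'a \<Rightarrow> 'a) \<Rightarrow> 'a rel list \<Rightarrow> (bool list \<Rightarrow> 'a) set"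
  for S m \<alpha>s where
    gen: "i < length \<alpha>s \<Longrightarrow> (a, b) \<in> \<alpha>s ! i \<Longrightarrow>
            (\<lambda>x. if x ! i then b else a) \<in> M_alg S m \<alpha>s"
  | prod: "f \<in> M_alg S m \<alpha>s \<Longrightarrow> g \<in> M_alg S m \<alpha>s \<Longrightarrow> (\<lambda>x. m (f x) (g x)) \<in> M_alg S m \<alpha>s"

definition term_cond :: "'a set \<Rightarrow> ('a \<Rightarrow> 'a \<Rightarrow> 'a) \<Rightarrow> 'a rel list \<Rightarrow> 'a rel \<Rightarrow> bool" where
  "term_cond S m \<alpha>s \<delta> \<longleftrightarrow> (\<forall>f\<in>M_alg S m \<alpha>s.
     (\<forall>x. length x = length \<alpha>s - 1 \<and> x \<noteq> replicate (length \<alpha>s - 1) True \<longrightarrow>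
          (f (x @ [False]), f (x @ [True])) \<in> \<delta>) \<longrightarrow>
     (f (replicate (length \<alpha>s - 1) True @ [False]), f (replicate (length \<alpha>s - 1) True @ [True])) \<in> \<delta>)"

definition hcomm :: "'a set \<Rightarrow> ('a \<Rightarrow> 'a \<Rightarrow> 'a) \<Rightarrow> 'a rel list \<Rightarrow> 'a rel" where
  "hcomm S m \<alpha>s = \<Inter>{\<delta>. is_congruence S m \<delta> \<and> term_cond S m \<alpha>s \<delta>}"

primrec derived_c :: "'a set \<Rightarrow> ('a \<Rightarrow> 'a \<Rightarrow> 'a) \<Rightarrow> nat \<Rightarrow> 'a rel" where
  "derived_c S m 0 = total_cong S"
| "derived_c S m (Suc k) = hcomm S m [derived_c S m k, derived_c S m k]"

text \<open>lcs k = (1]^(k+1), rcs k = [1)^(k+1)\<close>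
primrec lcs :: "'a set \<Rightarrow> ('a \<Rightarrow> 'a \<Rightarrow> 'a) \<Rightarrow> nat \<Rightarrow> 'a rel" where
  "lcs S m 0 = total_cong S"
| "lcs S m (Suc k) = hcomm S m [total_cong S, lcs S m k]"

primrec rcs :: "'a set \<Rightarrow> ('a \<Rightarrow> 'a \<Rightarrow> 'a) \<Rightarrow> nat \<Rightarrow> 'a rel" where
  "rcs S m 0 = total_cong S"
| "rcs S m (Suc k) = hcomm S m [rcs S m k, total_cong S]"

definition d_solvable :: "'a set \<Rightarrow> ('a \<Rightarrow> 'a \<Rightarrow> 'a) \<Rightarrow> nat \<Rightarrow> bool" where
  "d_solvable S m d \<longleftrightarrow> derived_c S m d = trivial_cong S"

definition left_nilpotent :: "'a set \<Rightarrow> ('a \<Rightarrow> 'a \<Rightarrow> 'a) \<Rightarrow> nat \<Rightarrow> bool" where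
  "left_nilpotent S m d \<longleftrightarrow> lcs S m d = trivial_cong S"

definition right_nilpotent :: "'a set \<Rightarrow> ('a \<Rightarrow> 'a \<Rightarrow> 'a) \<Rightarrow> nat \<Rightarrow> bool" where
  "right_nilpotent S m d \<longleftrightarrow> rcs S m d = trivial_cong S"

definition supernilpotent :: "'a set \<Rightarrow> ('a \<Rightarrow> 'a \<Rightarrow> 'a) \<Rightarrow> nat \<Rightarrow> bool" where
  "supernilpotent S m d \<longleftrightarrow> hcomm S m (replicate (Suc d) (total_cong S)) = trivial_cong S"

definition group_d_solvable :: "('a, 'b) monoid_scheme \<Rightarrow> nat \<Rightarrow> bool" where
  "group_d_solvable G d \<longleftrightarrow> (derived G ^^ d) (carrier G) = {\<one>\<^bsub>G\<^esub>}"

text \<open>Lower central series: gamma G k = gamma_(k+1)(G).\<close>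
primrec gamma :: "('a, 'b) monoid_scheme \<Rightarrow> nat \<Rightarrow> 'a set" where
  "gamma G 0 = carrier G"
| "gamma G (Suc k) = generate G {x \<otimes>\<^bsub>G\<^esub> y \<otimes>\<^bsub>G\<^esub> inv\<^bsub>G\<^esub> x \<otimes>\<^bsub>G\<^esub> inv\<^bsub>G\<^esub> y
                                  | x y. x \<in> gamma G k \<and> y \<in> carrier G}"

definition group_d_nilpotent :: "('a, 'b) monoid_scheme \<Rightarrow> nat \<Rightarrow> bool" where
  "group_d_nilpotent G d \<longleftrightarrow> gamma G d = {\<one>\<^bsub>G\<^esub>}"

end

theory Submission
  imports Defs
begin
locale sg =
  fixes S :: "'a set" and m :: "'a \<Rightarrow> 'a \<Rightarrow> 'a"
  assumes cl[simp]: "a \<in> S \<Longrightarrow> b \<in> S \<Longrightarrow> m a b \<in> S"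
    and asc[simp]: "a \<in> S \<Longrightarrow> b \<in> S \<Longrightarrow> c \<in> S \<Longrightarrow> m (m a b) c = m a (m b c)"
begin

lemma uts:
  assumes "simple_sg S m" "t \<in> S" "a \<in> S"
  shows "\<exists>u\<in>S. \<exists>v\<in>S. a = m u (m t v)"
proof -
  let ?I = "{m u (m t v) | u v. u \<in> S \<and> v \<in> S}"
  have "is_ideal S m ?I"
    unfolding is_ideal_def
  proof (intro conjI ballI)
    show "?I \<noteq> {}" using assms by blast
    show "?I \<subseteq> S" using assms by auto
  next
    fix s x assume s: "s \<in> S" and x: "x \<in> ?I"
    then obtain u v where uv: "u \<in> S" "v \<in> S" "x = m u (m t v)" by blast
    have "m s x = m (m s u) (m t v)" using uv s assms by simp
    moreover have "m s u \<in> S" using uv s by simp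
    ultimately show "m s x \<in> ?I" using uv by blast
    have "m x s = m u (m t (m v s))" using uv s assms by simp
    moreover have "m v s \<in> S" using uv s by simp
    ultimately show "m x s \<in> ?I" using uv by blast
  qed
  then have "?I = S" using assms(1) unfolding simple_sg_def by blast
  then show ?thesis using assms(3) by blast
qed

lemma grp:
  assumes "simple_sg S m" "primitive_idempotent S m e" "t \<in> S" "m e t = t" "m t e = t"
  shows "\<exists>z\<in>S. m t z = e \<and> m z t = e"
proof -
  have e: "e \<in> S" "m e e = e" using assms(2) unfolding primitive_idempotent_def by auto
  obtain p q where pq: "p \<in> S" "q \<in> S" "m p (m t q) = e" using uts[OF assms(1) assms(3) e(1)] by metis
  define l where "l = m e (m p e)"
  define r where "r = m e (m q e)"
  have lr: "l \<in> S" "r \<in> S" using pq e unfolding l_def r_def by auto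
  have eX: "\<And>X. X \<in> S \<Longrightarrow> m e (m e X) = m e X" using e by (simp flip: asc)
  have etX: "\<And>X. X \<in> S \<Longrightarrow> m e (m t X) = m t X" using e assms by (simp flip: asc)
  have teX: "\<And>X. X \<in> S \<Longrightarrow> m t (m e X) = m t X" using e assms by (simp flip: asc)
  have ptq: "\<And>X. X \<in> S \<Longrightarrow> m p (m t (m q X)) = m e X" using e assms pq
    by (metis asc cl)
  have re: "m r e = r" using e pq unfolding r_def by simp
  have le: "m l e = l" using e pq unfolding l_def by simp
  have er: "m e r = r" using e pq unfolding r_def by (simp add: eX)
  have ltr: "m l (m t r) = e" 
    using e pq assms unfolding l_def r_def by (simp add: etX teX ptq eX)
  define z where "z = m r l"
  have zS: "z \<in> S" using lr unfolding z_def by simp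
  have prim: "\<And>f. f \<in> S \<Longrightarrow> m f f = f \<Longrightarrow> m e f = f \<Longrightarrow> m f e = f \<Longrightarrow> f = e"
    using assms(2) unfolding primitive_idempotent_def by blast
  have i1: "m t z = e"
  proof (rule prim)
    show "m t z \<in> S" using zS assms by simp
    have "m (m t z) (m t z) = m t (m r (m (m l (m t r)) l))" using assms lr unfolding z_def by simp
    also have "\<dots> = m t (m r (m e l))" by (simp only: ltr)
    also have "m r (m e l) = m r l" using re lr e by (simp flip: asc)
    finally show "m (m t z) (m t z) = m t z" unfolding z_def by simp
    show "m e (m t z) = m t z" using assms zS e by (simp flip: asc)
    show "m (m t z) e = m t z" using assms lr le e unfolding z_def by simp
  qed
  have i2: "m z t = e"
  proof (rule prim)
    show "m z t \<in> S" using zS assms by simp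
    have "m (m z t) (m z t) = m r (m (m l (m t r)) (m l t))" using assms lr unfolding z_def by simp
    also have "\<dots> = m r (m e (m l t))" by (simp only: ltr)
    also have "\<dots> = m (m r e) (m l t)" using lr e assms by simp
    also have "\<dots> = m r (m l t)" by (simp only: re)
    finally show "m (m z t) (m z t) = m z t" using lr assms unfolding z_def by simp
    show "m e (m z t) = m z t" using assms lr er e unfolding z_def by (simp flip: asc)
    show "m (m z t) e = m z t" using assms zS e by simp
  qed
  show ?thesis using zS i1 i2 by blast
qed

lemma bridge:
  assumes cs: "completely_simple S m" and ab: "a \<in> S" "b \<in> S"
  shows "\<exists>f\<in>S. m a f = a \<and> m f b = b"
proof -
  have simpl: "simple_sg S m" using cs unfolding completely_simple_def by blast
  obtain e where pe: "primitive_idempotent S m e" using cs unfolding completely_simple_def by blast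
  have e: "e \<in> S" "m e e = e" using pe unfolding primitive_idempotent_def by auto
  obtain u v where uv: "u \<in> S" "v \<in> S" "a = m u (m e v)" using uts[OF simpl e(1) ab(1)] by blast
  obtain u' v' where uv': "u' \<in> S" "v' \<in> S" "b = m u' (m e v')" using uts[OF simpl e(1) ab(2)] by blast
  define X where "X = m e v"
  define Y where "Y = m u' e"
  have XY: "X \<in> S" "Y \<in> S" using e uv uv' unfolding X_def Y_def by auto
  have eX: "m e X = X" using e uv unfolding X_def by (simp flip: asc)
  have Ye: "m Y e = Y" using e uv' unfolding Y_def by simp
  have et: "m e (m X Y) = m X Y" using eX XY e by (simp flip: asc)
  have te: "m (m X Y) e = m X Y" using Ye XY e by simp
  obtain z where z: "z \<in> S" "m (m X Y) z = e" "m z (m X Y) = e"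
    using grp[OF simpl pe _ et te] XY by auto
  define f where "f = m Y (m z X)"
  have fS: "f \<in> S" using XY z unfolding f_def by simp
  have a: "a = m u X" using uv unfolding X_def by simp
  have b: "b = m Y v'" using uv' e unfolding Y_def by simp
  have "m a f = m u (m (m (m X Y) z) X)" using a XY z(1) uv unfolding f_def by simp
  also have "\<dots> = m u (m e X)" by (simp only: z)
  also have "\<dots> = a" using a eX by simp
  finally have 1: "m a f = a" .
  have "m f b = m Y (m (m z (m X Y)) v')" using b XY z(1) uv' unfolding f_def by simp
  also have "\<dots> = m Y (m e v')" by (simp only: z)
  also have "\<dots> = b" using b Ye XY e uv' by (simp flip: asc)
  finally have 2: "m f b = b" .
  show ?thesis using 1 2 fS by blast
qed

end

lemma M_alg_vals:
  assumes "f \<in> M_alg T m \<alpha>s" "\<forall>\<alpha>\<in>set \<alpha>s. \<alpha> \<subseteq> T \<times> T"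
    "\<forall>a\<in>T. \<forall>b\<in>T. m a b \<in> T"
  shows "f x \<in> T"
  using assms(1)
proof (induction rule: M_alg.induct)
  case (gen i a b)
  then have "(a, b) \<in> T \<times> T" using assms(2) nth_mem by blast
  then show ?case by auto
next
  case (prod f g)
  then show ?case using assms(3) by auto
qed

lemma M_alg_mono:
  assumes "f \<in> M_alg T m \<beta>s" "length \<beta>s = length \<alpha>s" "\<forall>i<length \<alpha>s. \<beta>s ! i \<subseteq> \<alpha>s ! i"
  shows "f \<in> M_alg S m \<alpha>s"
  using assms(1)
proof (induction rule: M_alg.induct)
  case (gen i a b)
  then show ?case using assms by (intro M_alg.gen) auto
next
  case (prod f g)
  then show ?case by (intro M_alg.prod)
qed

lemma total_tc:
  assumes "\<forall>\<alpha>\<in>set \<alpha>s. \<alpha> \<subseteq> T \<times> T" "\<forall>a\<in>T. \<forall>b\<in>T. m a b \<in> T"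
  shows "term_cond T m \<alpha>s (T \<times> T)"
  unfolding term_cond_def using M_alg_vals[OF _ assms] by blast

lemma total_cong:
  assumes "\<forall>a\<in>T. \<forall>b\<in>T. m a b \<in> T"
  shows "is_congruence T m (T \<times> T)"
  unfolding is_congruence_def using assms by (auto simp: equiv_def refl_on_def sym_def trans_def)

lemma hcomm_cong:
  assumes "\<forall>\<alpha>\<in>set \<alpha>s. \<alpha> \<subseteq> T \<times> T" "\<forall>a\<in>T. \<forall>b\<in>T. m a b \<in> T"
  shows "is_congruence T m (hcomm T m \<alpha>s)" "hcomm T m \<alpha>s \<subseteq> T \<times> T"
proof -
  let ?F = "{\<delta>. is_congruence T m \<delta> \<and> term_cond T m \<alpha>s \<delta>}"
  have TF: "T \<times> T \<in> ?F" using total_tc[OF assms] total_cong[OF assms(2)] by blast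
  show sub: "hcomm T m \<alpha>s \<subseteq> T \<times> T" unfolding hcomm_def using TF by blast
  have eq: "\<And>\<delta>. \<delta> \<in> ?F \<Longrightarrow> equiv T \<delta> \<and> (\<forall>a b c d. (a, b) \<in> \<delta> \<longrightarrow> (c, d) \<in> \<delta> \<longrightarrow> (m a c, m b d) \<in> \<delta>)"
    unfolding is_congruence_def by blast
  show "is_congruence T m (hcomm T m \<alpha>s)"
    unfolding is_congruence_def
  proof (intro conjI allI impI)
    show "equiv T (hcomm T m \<alpha>s)"
    proof (rule equivI)
      show "hcomm T m \<alpha>s \<subseteq> T \<times> T" by (rule sub)
      show "refl_on T (hcomm T m \<alpha>s)" unfolding refl_on_def
        using sub eq unfolding hcomm_def by (auto simp: equiv_def refl_on_def)
      show "sym (hcomm T m \<alpha>s)" unfolding sym_def hcomm_def using eq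
        by (auto simp: equiv_def sym_def)
      show "trans (hcomm T m \<alpha>s)" unfolding trans_def hcomm_def
      proof (intro allI impI InterI)
        fix x y z \<delta> assume "(x, y) \<in> \<Inter> ?F" "(y, z) \<in> \<Inter> ?F" "\<delta> \<in> ?F"
        then have "(x, y) \<in> \<delta>" "(y, z) \<in> \<delta>" "trans \<delta>" using eq[of \<delta>] unfolding equiv_def by blast+
        then show "(x, z) \<in> \<delta>" unfolding trans_def by blast
      qed
    qed
    fix a b c d assume "(a, b) \<in> hcomm T m \<alpha>s" "(c, d) \<in> hcomm T m \<alpha>s"
    then show "(m a c, m b d) \<in> hcomm T m \<alpha>s" unfolding hcomm_def using eq by blast
  qed
qed

lemma hcomm_mono:
  assumes T: "T \<subseteq> S" "\<forall>a\<in>T. \<forall>b\<in>T. m a b \<in> T"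
    and len: "length \<beta>s = length \<alpha>s" and sub: "\<forall>i<length \<alpha>s. \<beta>s ! i \<subseteq> \<alpha>s ! i"
    and bT: "\<forall>\<beta>\<in>set \<beta>s. \<beta> \<subseteq> T \<times> T"
  shows "hcomm T m \<beta>s \<subseteq> hcomm S m \<alpha>s"
proof
  fix p assume p: "p \<in> hcomm T m \<beta>s"
  show "p \<in> hcomm S m \<alpha>s" unfolding hcomm_def
  proof (rule InterI)
    fix \<delta> assume "\<delta> \<in> {\<delta>. is_congruence S m \<delta> \<and> term_cond S m \<alpha>s \<delta>}"
    then have c: "is_congruence S m \<delta>" and tc: "term_cond S m \<alpha>s \<delta>" by auto
    let ?d = "\<delta> \<inter> T \<times> T"
    have "is_congruence T m ?d"
    proof -
      have e: "equiv S \<delta>" and cp: "\<And>a b c d. (a, b) \<in> \<delta> \<Longrightarrow> (c, d) \<in> \<delta> \<Longrightarrow> (m a c, m b d) \<in> \<delta>"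
        using c unfolding is_congruence_def by blast+
      have "equiv T ?d"
      proof (rule equivI)
        show "?d \<subseteq> T \<times> T" by blast
        show "refl_on T ?d" using e T(1) unfolding equiv_def refl_on_def by blast
        show "sym ?d" using e unfolding equiv_def sym_def by blast
        show "trans ?d" using e unfolding equiv_def trans_def by blast
      qed
      then show ?thesis unfolding is_congruence_def using cp T(2) by blast
    qed
    moreover have "term_cond T m \<beta>s ?d"
      unfolding term_cond_def
    proof (intro ballI impI)
      fix f assume f: "f \<in> M_alg T m \<beta>s"
        and h: "\<forall>x. length x = length \<beta>s - 1 \<and> x \<noteq> replicate (length \<beta>s - 1) True \<longrightarrow>
          (f (x @ [False]), f (x @ [True])) \<in> ?d"
      have fS: "f \<in> M_alg S m \<alpha>s" using M_alg_mono[OF f len sub] .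
      have v: "\<And>x. f x \<in> T" using M_alg_vals[OF f bT T(2)] .
      have "(f (replicate (length \<alpha>s - 1) True @ [False]), f (replicate (length \<alpha>s - 1) True @ [True])) \<in> \<delta>"
        using tc fS h len unfolding term_cond_def by auto
      then show "(f (replicate (length \<beta>s - 1) True @ [False]), f (replicate (length \<beta>s - 1) True @ [True])) \<in> ?d"
        using v len by auto
    qed
    ultimately have "p \<in> ?d" using p unfolding hcomm_def by blast
    then show "p \<in> \<delta>" by blast
  qed
qed

lemma hcomm_intro:
  assumes "\<And>\<delta>. is_congruence S m \<delta> \<Longrightarrow> term_cond S m \<alpha>s \<delta> \<Longrightarrow> p \<in> \<delta>"
  shows "p \<in> hcomm S m \<alpha>s"
  unfolding hcomm_def using assms by blast

lemma binary:
  assumes cl: "\<forall>x\<in>S. \<forall>y\<in>S. m x y \<in> S"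
    and a0: "(a, u) \<in> \<alpha>0" and a1: "(v, w) \<in> \<alpha>1" and eq: "m a v = m a w"
    and S: "a \<in> S" "v \<in> S"
  shows "(m u v, m u w) \<in> hcomm S m [\<alpha>0, \<alpha>1]"
proof (rule hcomm_intro)
  fix \<delta> assume c: "is_congruence S m \<delta>" and tc: "term_cond S m [\<alpha>0, \<alpha>1] \<delta>"
  define F where "F = (\<lambda>x::bool list. m (if x ! 0 then u else a) (if x ! 1 then w else v))"
  have "F \<in> M_alg S m [\<alpha>0, \<alpha>1]" unfolding F_def
    by (rule M_alg.prod; rule M_alg.gen) (use a0 a1 in auto)
  moreover have "\<forall>x. length x = 1 \<and> x \<noteq> [True] \<longrightarrow> (F (x @ [False]), F (x @ [True])) \<in> \<delta>"
  proof (intro allI impI)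
    fix x :: "bool list" assume "length x = 1 \<and> x \<noteq> [True]"
    then have x: "x = [False]" by (cases x) auto
    have "m a v \<in> S" using cl S by blast
    then have "(m a v, m a v) \<in> \<delta>" using c unfolding is_congruence_def equiv_def refl_on_def by blast
    then show "(F (x @ [False]), F (x @ [True])) \<in> \<delta>" using x eq unfolding F_def by simp
  qed
  ultimately have "(F ([True] @ [False]), F ([True] @ [True])) \<in> \<delta>"
    using tc unfolding term_cond_def by (simp add: numeral_eq_Suc)
  then show "(m u v, m u w) \<in> \<delta>" unfolding F_def by simp
qed

lemma lprod_Cons: "xs \<noteq> [] \<Longrightarrow> lprod m (x # xs) = m x (lprod m xs)"
  by (cases xs) auto

lemma lprod_S:
  assumes "\<forall>a\<in>S. \<forall>b\<in>S. m a b \<in> S" "xs \<noteq> []" "set xs \<subseteq> S"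
  shows "lprod m xs \<in> S"
  using assms(2,3)
proof (induction xs)
  case (Cons x xs)
  then show ?case using assms(1) by (cases "xs = []") (auto simp: lprod_Cons)
qed auto

lemma lprod_append:
  assumes sg: "is_semigroup S m" and "xs \<noteq> []" "ys \<noteq> []" "set xs \<subseteq> S" "set ys \<subseteq> S"
  shows "lprod m (xs @ ys) = m (lprod m xs) (lprod m ys)"
  using assms(2-)
proof (induction xs)
  case (Cons x xs)
  have cl: "\<forall>a\<in>S. \<forall>b\<in>S. m a b \<in> S" using sg unfolding is_semigroup_def by blast
  show ?case
  proof (cases "xs = []")
    case True
    then show ?thesis using Cons by (simp add: lprod_Cons)
  next
    case False
    have "lprod m ((x # xs) @ ys) = m x (lprod m (xs @ ys))" using Cons by (simp add: lprod_Cons)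
    also have "\<dots> = m x (m (lprod m xs) (lprod m ys))" using Cons False by simp
    also have "\<dots> = m (m x (lprod m xs)) (lprod m ys)"
      using sg lprod_S[OF cl, of xs] lprod_S[OF cl, of ys] Cons False unfolding is_semigroup_def by auto
    finally show ?thesis using False by (simp add: lprod_Cons)
  qed
qed auto

lemma spow_split:
  assumes sg: "is_semigroup S m" and x: "x \<in> spow S m (p + q)" and pq: "p \<ge> 1" "q \<ge> 1"
  shows "\<exists>u\<in>spow S m p. \<exists>v\<in>spow S m q. x = m u v"
proof -
  obtain xs where xs: "x = lprod m xs" "length xs = p + q" "set xs \<subseteq> S"
    using x unfolding spow_def by blast
  let ?u = "take p xs" and ?v = "drop p xs"
  have "?u \<noteq> []" "?v \<noteq> []" using xs pq by (auto simp: take_eq_Nil)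
  moreover have "set ?u \<subseteq> S" "set ?v \<subseteq> S" using xs set_take_subset set_drop_subset by fast+
  ultimately have "x = m (lprod m ?u) (lprod m ?v)"
    using lprod_append[OF sg] xs by (metis append_take_drop_id)
  moreover have "lprod m ?u \<in> spow S m p" "lprod m ?v \<in> spow S m q"
    unfolding spow_def using xs \<open>set ?u \<subseteq> S\<close> \<open>set ?v \<subseteq> S\<close> by auto
  ultimately show ?thesis by blast
qed

lemma spow1: "spow S m 1 = S"
proof
  show "spow S m 1 \<subseteq> S"
  proof
    fix x assume "x \<in> spow S m 1"
    then obtain xs where "x = lprod m xs" "length xs = 1" "set xs \<subseteq> S" unfolding spow_def by blast
    then show "x \<in> S" by (cases xs) auto
  qed
  show "S \<subseteq> spow S m 1" unfolding spow_def
    by (auto intro!: exI[of _ "[_]"])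
qed

lemma spow_sub:
  assumes "\<forall>a\<in>S. \<forall>b\<in>S. m a b \<in> S" "n \<ge> 1"
  shows "spow S m n \<subseteq> S"
proof
  fix x assume "x \<in> spow S m n"
  then obtain xs where "x = lprod m xs" "length xs = n" "set xs \<subseteq> S" unfolding spow_def by blast
  then show "x \<in> S" using lprod_S[OF assms(1), of xs] assms(2) by (cases xs) auto
qed

lemma K_sub_spow:
  assumes sg: "is_semigroup S m" and I: "is_ideal S m K" and cs: "completely_simple K m" and n: "n \<ge> 1"
  shows "K \<subseteq> spow S m n"
proof -
  have KS: "K \<subseteq> S" using I unfolding is_ideal_def by blast
  have sgK: "is_semigroup K m" using cs unfolding completely_simple_def by blast
  have KK: "\<forall>k\<in>K. \<exists>k1\<in>K. \<exists>k2\<in>K. k = m k1 k2"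
  proof -
    let ?I = "{m a b | a b. a \<in> K \<and> b \<in> K}"
    have "is_ideal K m ?I" unfolding is_ideal_def
    proof (intro conjI ballI)
      show "?I \<noteq> {}" using cs unfolding completely_simple_def by blast
      show "?I \<subseteq> K" using sgK unfolding is_semigroup_def by blast
    next
      fix s x assume s: "s \<in> K" and "x \<in> ?I"
      then obtain a b where ab: "a \<in> K" "b \<in> K" "x = m a b" by blast
      have "m s x = m (m s a) b" "m (m s a) b \<in> ?I" using sgK s ab unfolding is_semigroup_def by auto
      then show "m s x \<in> ?I" by simp
      have "m x s = m a (m b s)" "m a (m b s) \<in> ?I" using sgK s ab unfolding is_semigroup_def by auto
      then show "m x s \<in> ?I" by simp
    qed
    then have "?I = K" using cs unfolding completely_simple_def simple_sg_def by blast
    then show ?thesis by blast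
  qed
  have "\<forall>k\<in>K. \<exists>xs. length xs = Suc j \<and> set xs \<subseteq> K \<and> k = lprod m xs" for j
  proof (induction j)
    case 0
    then show ?case by (auto intro!: exI[of _ "[_]"])
  next
    case (Suc j)
    show ?case
    proof
      fix k assume "k \<in> K"
      then obtain k1 k2 where k: "k1 \<in> K" "k2 \<in> K" "k = m k1 k2" using KK by blast
      then obtain xs where xs: "length xs = Suc j" "set xs \<subseteq> K" "k2 = lprod m xs" using Suc by blast
      then obtain y ys where "xs = y # ys" by (cases xs) auto
      then have "k = lprod m (k1 # xs)" using k xs by simp
      then show "\<exists>xs. length xs = Suc (Suc j) \<and> set xs \<subseteq> K \<and> k = lprod m xs"
        using xs k by (intro exI[of _ "k1 # xs"]) auto
    qed
  qed
  note H = this[of "n - 1"]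
  show ?thesis
  proof
    fix k assume "k \<in> K"
    then obtain xs where "length xs = Suc (n - 1)" "set xs \<subseteq> K" "k = lprod m xs" using H by blast
    then show "k \<in> spow S m n" unfolding spow_def using n KS by auto
  qed
qed

lemma bridgeK:
  assumes "completely_simple K m" "a \<in> K" "b \<in> K"
  shows "\<exists>f\<in>K. m a f = a \<and> m f b = b"
proof -
  have "is_semigroup K m" using assms(1) unfolding completely_simple_def by blast
  then interpret sg K m by unfold_locales (auto simp: is_semigroup_def)
  show ?thesis using bridge assms by blast
qed

lemma step:
  assumes sg: "is_semigroup S m" and I: "is_ideal S m K" and cs: "completely_simple K m"
    and c1: "is_congruence S m \<theta>1" and s0: "sym \<theta>0"
    and ua: "(u, a) \<in> \<theta>0" and vb: "(v, b) \<in> \<theta>1" and K: "a \<in> K" "b \<in> K" and S: "u \<in> S" "v \<in> S"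
  shows "\<exists>y\<in>K. (m u v, y) \<in> hcomm S m [\<theta>0, \<theta>1]"
proof -
  obtain f where f: "f \<in> K" "m a f = a" "m f b = b" using bridgeK[OF cs K] by blast
  have KS: "K \<subseteq> S" using I unfolding is_ideal_def by blast
  have cl: "\<forall>x\<in>S. \<forall>y\<in>S. m x y \<in> S" and as: "\<forall>x\<in>S. \<forall>y\<in>S. \<forall>z\<in>S. m (m x y) z = m x (m y z)"
    using sg unfolding is_semigroup_def by auto
  have e1: "equiv S \<theta>1" and cp: "\<And>a b c d. (a, b) \<in> \<theta>1 \<Longrightarrow> (c, d) \<in> \<theta>1 \<Longrightarrow> (m a c, m b d) \<in> \<theta>1"
    using c1 unfolding is_congruence_def by blast+
  have "(f, f) \<in> \<theta>1" using e1 f KS unfolding equiv_def refl_on_def by blast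
  then have "(m f v, m f b) \<in> \<theta>1" using cp vb by blast
  then have "(m f v, v) \<in> \<theta>1" using vb f e1 unfolding equiv_def sym_def trans_def by metis
  then have vfv: "(v, m f v) \<in> \<theta>1" using e1 unfolding equiv_def sym_def by blast
  have au: "(a, u) \<in> \<theta>0" using s0 ua unfolding sym_def by blast
  have eq: "m a v = m a (m f v)" using as f KS S K by (metis subsetD)
  have "(m u v, m u (m f v)) \<in> hcomm S m [\<theta>0, \<theta>1]"
    using binary[OF cl au vfv eq] K KS S by blast
  moreover have "m u (m f v) \<in> K" using I f S unfolding is_ideal_def by blast
  ultimately show ?thesis by blast
qed

lemma derived_cong: "is_semigroup S m \<Longrightarrow> is_congruence S m (derived_c S m k) \<and> derived_c S m k \<subseteq> S \<times> S"
proof (induction k)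
  case 0
  then show ?case using total_cong[of S m] unfolding is_semigroup_def by auto
next
  case (Suc k)
  then show ?case using hcomm_cong[of "[derived_c S m k, derived_c S m k]" S m] unfolding is_semigroup_def by auto
qed

lemma lcs_cong: "is_semigroup S m \<Longrightarrow> is_congruence S m (lcs S m k) \<and> lcs S m k \<subseteq> S \<times> S"
proof (induction k)
  case 0
  then show ?case using total_cong[of S m] unfolding is_semigroup_def by auto
next
  case (Suc k)
  then show ?case using hcomm_cong[of "[S \<times> S, lcs S m k]" S m] unfolding is_semigroup_def by auto
qed

lemma rcs_cong: "is_semigroup S m \<Longrightarrow> is_congruence S m (rcs S m k) \<and> rcs S m k \<subseteq> S \<times> S"
proof (induction k)
  case 0
  then show ?case using total_cong[of S m] unfolding is_semigroup_def by auto
next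
  case (Suc k)
  then show ?case using hcomm_cong[of "[rcs S m k, S \<times> S]" S m] unfolding is_semigroup_def by auto
qed

lemma cong_sym: "is_congruence S m \<theta> \<Longrightarrow> sym \<theta>"
  unfolding is_congruence_def equiv_def by blast

context
  fixes S K m
  assumes sg: "is_semigroup S m" and I: "is_ideal S m K" and cs: "completely_simple K m"
begin

lemma KS: "K \<subseteq> S" using I unfolding is_ideal_def by blast
lemma Kne: "K \<noteq> {}" using I unfolding is_ideal_def by blast
lemma clS: "\<forall>x\<in>S. \<forall>y\<in>S. m x y \<in> S" using sg unfolding is_semigroup_def by blast

lemma sol_claim: "\<forall>x\<in>spow S m (2 ^ k). \<exists>y\<in>K. (x, y) \<in> derived_c S m k"
proof (induction k)
  case 0
  then show ?case using spow1[of S m] Kne KS by auto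
next
  case (Suc k)
  show ?case
  proof
    fix x assume "x \<in> spow S m (2 ^ Suc k)"
    then have "x \<in> spow S m (2 ^ k + 2 ^ k)" by (simp add: mult_2)
    then obtain u v where uv: "u \<in> spow S m (2 ^ k)" "v \<in> spow S m (2 ^ k)" "x = m u v"
      using spow_split[OF sg] by (metis one_le_numeral one_le_power)
    have S: "u \<in> S" "v \<in> S" using uv spow_sub[OF clS, of "2 ^ k"] by auto
    obtain a b where ab: "a \<in> K" "b \<in> K" "(u, a) \<in> derived_c S m k" "(v, b) \<in> derived_c S m k"
      using Suc uv by blast
    have c: "is_congruence S m (derived_c S m k)" using derived_cong[OF sg] by blast
    show "\<exists>y\<in>K. (x, y) \<in> derived_c S m (Suc k)"
      using step[OF sg I cs c cong_sym[OF c] ab(3) ab(4) ab(1,2) S] uv by simp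
  qed
qed

lemma lcs_claim: "\<forall>x\<in>spow S m (Suc k). \<exists>y\<in>K. (x, y) \<in> lcs S m k"
proof (induction k)
  case 0
  then show ?case using spow1[of S m] Kne KS by auto
next
  case (Suc k)
  show ?case
  proof
    fix x assume "x \<in> spow S m (Suc (Suc k))"
    then have "x \<in> spow S m (1 + Suc k)" by simp
    then obtain u v where uv: "u \<in> spow S m 1" "v \<in> spow S m (Suc k)" "x = m u v"
      using spow_split[OF sg] by (metis le_add1 plus_1_eq_Suc order_refl)
    have S: "u \<in> S" "v \<in> S" using uv spow_sub[OF clS, of "Suc k"] spow1[of S m] by auto
    obtain b where b: "b \<in> K" "(v, b) \<in> lcs S m k" using Suc uv by blast
    obtain a where a: "a \<in> K" using Kne by blast
    have c: "is_congruence S m (lcs S m k)" using lcs_cong[OF sg] by blast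
    have "(u, a) \<in> S \<times> S" using S a KS by auto
    moreover have "sym (S \<times> S)" unfolding sym_def by auto
    ultimately show "\<exists>y\<in>K. (x, y) \<in> lcs S m (Suc k)"
      using step[OF sg I cs c _ _ b(2) a b(1) S] uv by simp
  qed
qed

lemma rcs_claim: "\<forall>x\<in>spow S m (Suc k). \<exists>y\<in>K. (x, y) \<in> rcs S m k"
proof (induction k)
  case 0
  then show ?case using spow1[of S m] Kne KS by auto
next
  case (Suc k)
  show ?case
  proof
    fix x assume "x \<in> spow S m (Suc (Suc k))"
    then have "x \<in> spow S m (Suc k + 1)" by simp
    then obtain u v where uv: "u \<in> spow S m (Suc k)" "v \<in> spow S m 1" "x = m u v"
      using spow_split[OF sg] by (metis le_add1 plus_1_eq_Suc order_refl)
    have S: "u \<in> S" "v \<in> S" using uv spow_sub[OF clS, of "Suc k"] spow1[of S m] by auto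
    obtain a where a: "a \<in> K" "(u, a) \<in> rcs S m k" using Suc uv by blast
    have c: "is_congruence S m (rcs S m k)" using rcs_cong[OF sg] by blast
    have c1: "is_congruence S m (S \<times> S)" using total_cong[OF clS] .
    have "(v, a) \<in> S \<times> S" using S a KS by auto
    then show "\<exists>y\<in>K. (x, y) \<in> rcs S m (Suc k)"
      using step[OF sg I cs c1 cong_sym[OF c] a(2) _ a(1) a(1) S] uv by simp
  qed
qed

end

primrec pf :: "('a \<Rightarrow> 'a \<Rightarrow> 'a) \<Rightarrow> (nat \<Rightarrow> 'a) \<Rightarrow> nat \<Rightarrow> 'a" where
  "pf m h 0 = h 0"
| "pf m h (Suc n) = m (pf m h n) (h (Suc n))"

lemma pf_S: "\<forall>a\<in>S. \<forall>b\<in>S. m a b \<in> S \<Longrightarrow> \<forall>i\<le>n. h i \<in> S \<Longrightarrow> pf m h n \<in> S"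
  by (induction n) auto

lemma pf_cong: "\<forall>i\<le>n. h i = h' i \<Longrightarrow> pf m h n = pf m h' n"
  by (induction n) auto

lemma lprod_pf:
  assumes sg: "is_semigroup S m"
  shows "xs \<noteq> [] \<Longrightarrow> set xs \<subseteq> S \<Longrightarrow> lprod m xs = pf m (\<lambda>i. xs ! i) (length xs - 1)"
proof (induction xs rule: rev_induct)
  case (snoc t ys)
  show ?case
  proof (cases "ys = []")
    case True
    then show ?thesis by simp
  next
    case False
    have "lprod m (ys @ [t]) = m (lprod m ys) t"
      using lprod_append[OF sg False, of "[t]"] snoc by simp
    also have "\<dots> = m (pf m (\<lambda>i. ys ! i) (length ys - 1)) t" using snoc False by simp
    also have "pf m (\<lambda>i. ys ! i) (length ys - 1) = pf m (\<lambda>i. (ys @ [t]) ! i) (length ys - 1)"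
      using False by (intro pf_cong) (auto simp: nth_append neq_Nil_conv)
    finally show ?thesis using False
      by (cases "length ys") (auto simp: nth_append)
  qed
qed simp

lemma super_claim:
  assumes sg: "is_semigroup S m" and I: "is_ideal S m K" and cs: "completely_simple K m"
    and sn: "supernilpotent S m d"
  shows "spow S m (Suc d) \<subseteq> K"
proof
  have KS: "K \<subseteq> S" using I unfolding is_ideal_def by blast
  have cl: "\<forall>a\<in>S. \<forall>b\<in>S. m a b \<in> S" and as: "\<And>x y z. x\<in>S \<Longrightarrow> y\<in>S \<Longrightarrow> z\<in>S \<Longrightarrow> m (m x y) z = m x (m y z)"
    using sg unfolding is_semigroup_def by auto
  fix x assume "x \<in> spow S m (Suc d)"
  then obtain xs where xs: "x = lprod m xs" "length xs = Suc d" "set xs \<subseteq> S" unfolding spow_def by blast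
  define s where "s = (\<lambda>i. xs ! i)"
  have sS: "\<And>i. i \<le> d \<Longrightarrow> s i \<in> S" using xs nth_mem unfolding s_def by (metis le_imp_less_Suc subsetD)
  have x: "x = pf m s d" using lprod_pf[OF sg, of xs] xs unfolding s_def by (cases xs) auto
  obtain a where a: "a \<in> K" using I unfolding is_ideal_def by blast
  define w where "w = (\<lambda>n. m a (pf m s n))"
  have Kl: "\<And>s k. s \<in> S \<Longrightarrow> k \<in> K \<Longrightarrow> m s k \<in> K \<and> m k s \<in> K"
    using I unfolding is_ideal_def by blast
  have pfs: "\<And>n. n \<le> d \<Longrightarrow> pf m s n \<in> S"
  proof -
    fix n assume "n \<le> d"
    then have "\<forall>i\<le>n. s i \<in> S" using sS by auto
    then show "pf m s n \<in> S" using pf_S[OF cl] by blast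
  qed
  have wK: "\<And>n. n \<le> d \<Longrightarrow> w n \<in> K" unfolding w_def using Kl a pfs by blast
  define a' where "a' = (if d = 0 then a else w (d - 1))"
  have a'K: "a' \<in> K" unfolding a'_def using a wK by auto
  obtain g where g: "g \<in> K" "m a' g = a'" using bridgeK[OF cs a'K a'K] by blast
  define low where "low = (\<lambda>i. if i < d then w i else m g (s d))"
  have gsK: "m g (s d) \<in> K" using Kl g sS by blast
  have lowS: "\<And>i. i \<le> d \<Longrightarrow> low i \<in> S" unfolding low_def using wK KS gsK
    by (metis less_or_eq_imp_le subsetD)
  define h where "h = (\<lambda>(x::bool list) i. if x ! i then s i else low i)"
  have hS: "\<And>y i. i \<le> d \<Longrightarrow> h y i \<in> S" unfolding h_def using sS lowS by auto
  define \<alpha>s where "\<alpha>s = replicate (Suc d) (S \<times> S)"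
  define F where "F = (\<lambda>y. pf m (h y) d)"
  have FM: "n \<le> d \<Longrightarrow> (\<lambda>y. pf m (h y) n) \<in> M_alg S m \<alpha>s" for n
  proof (induction n)
    case 0
    have "(\<lambda>y. if y ! 0 then s 0 else low 0) \<in> M_alg S m \<alpha>s"
      by (rule M_alg.gen) (use sS lowS in \<open>auto simp: \<alpha>s_def\<close>)
    then show ?case unfolding h_def by simp
  next
    case (Suc n)
    have "(\<lambda>y. if y ! Suc n then s (Suc n) else low (Suc n)) \<in> M_alg S m \<alpha>s"
      by (rule M_alg.gen) (use sS lowS Suc.prems in \<open>auto simp: \<alpha>s_def\<close>)
    then show ?case using Suc M_alg.prod unfolding h_def by fastforce
  qed
  have "(F (replicate d True @ [False]), F (replicate d True @ [True])) \<in> hcomm S m \<alpha>s"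
  proof (rule hcomm_intro)
    fix \<delta> assume c: "is_congruence S m \<delta>" and tc: "term_cond S m \<alpha>s \<delta>"
    have refl: "\<And>z. z \<in> S \<Longrightarrow> (z, z) \<in> \<delta>" using c unfolding is_congruence_def equiv_def refl_on_def by blast
    have "\<forall>y. length y = d \<and> y \<noteq> replicate d True \<longrightarrow> (F (y @ [False]), F (y @ [True])) \<in> \<delta>"
    proof (intro allI impI)
      fix y :: "bool list" assume y: "length y = d \<and> y \<noteq> replicate d True"
      have "\<exists>j<d. \<not> y ! j"
      proof (rule ccontr)
        assume "\<not> (\<exists>j<d. \<not> y ! j)"
        then have "\<And>i. i < length y \<Longrightarrow> y ! i = replicate d True ! i" using y by simp
        then have "y = replicate d True" using y by (intro nth_equalityI) simp_all
        then show False using y by blast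
      qed
      then obtain j where j: "j < d" "\<not> y ! j" by blast
      then obtain d' where d': "d = Suc d'" by (cases d) auto
      define Q where "Q = (\<lambda>n. pf m (\<lambda>i. if y ! i then s i else low i) n)"
      have C: "n \<le> d' \<Longrightarrow> (\<exists>j\<le>n. \<not> y ! j) \<Longrightarrow> (\<forall>t\<in>S. \<forall>t'\<in>S. m (w n) t = m (w n) t' \<longrightarrow> m (Q n) t = m (Q n) t')" for n
      proof (induction n)
        case 0
        then show ?case unfolding Q_def low_def d' by auto
      next
        case (Suc n)
        have QS: "Q n \<in> S" unfolding Q_def
          by (rule pf_S[OF cl]) (use sS lowS Suc.prems d' in auto)
        have sn: "s (Suc n) \<in> S" using sS Suc.prems d' by auto
        have pS: "pf m s n \<in> S" using pfs Suc.prems d' by auto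
        have wn: "w n \<in> S" using wK KS Suc.prems d' by auto
        have aS: "a \<in> S" using a KS by auto
        have wS: "w (Suc n) = m (w n) (s (Suc n))" unfolding w_def using as[OF aS pS sn] by simp
        show ?case
        proof (intro ballI impI)
          fix t t' assume tt: "t \<in> S" "t' \<in> S" "m (w (Suc n)) t = m (w (Suc n)) t'"
          show "m (Q (Suc n)) t = m (Q (Suc n)) t'"
          proof (cases "y ! Suc n")
            case False
            have wSS: "w (Suc n) \<in> S" using wK KS Suc.prems d' by auto
            have Qe: "Q (Suc n) = m (Q n) (w (Suc n))" unfolding Q_def low_def using False Suc.prems d' by simp
            have "m (Q (Suc n)) t = m (Q n) (m (w (Suc n)) t)" unfolding Qe using as[OF QS wSS tt(1)] .
            also have "\<dots> = m (Q n) (m (w (Suc n)) t')" using tt(3) by simp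
            also have "\<dots> = m (Q (Suc n)) t'" unfolding Qe using as[OF QS wSS tt(2)] by simp
            finally show ?thesis .
          next
            case True
            obtain j where "j \<le> Suc n" "\<not> y ! j" using Suc.prems(2) by blast
            then have ex: "\<exists>j\<le>n. \<not> y ! j" using True le_Suc_eq by blast
            have Qe: "Q (Suc n) = m (Q n) (s (Suc n))" unfolding Q_def using True by simp
            have st: "m (s (Suc n)) t \<in> S" "m (s (Suc n)) t' \<in> S" using sn tt cl by auto
            have "m (w n) (m (s (Suc n)) t) = m (w (Suc n)) t" unfolding wS using as[OF wn sn tt(1)] by simp
            also have "\<dots> = m (w (Suc n)) t'" by (rule tt(3))
            also have "\<dots> = m (w n) (m (s (Suc n)) t')" unfolding wS using as[OF wn sn tt(2)] by simp
            finally have "m (w n) (m (s (Suc n)) t) = m (w n) (m (s (Suc n)) t')" .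
            moreover have "\<forall>t\<in>S. \<forall>t'\<in>S. m (w n) t = m (w n) t' \<longrightarrow> m (Q n) t = m (Q n) t'"
              using Suc.IH[OF Suc_leD[OF Suc.prems(1)] ex] .
            ultimately have "m (Q n) (m (s (Suc n)) t) = m (Q n) (m (s (Suc n)) t')"
              using st by blast
            then show ?thesis unfolding Qe using as[OF QS sn tt(1)] as[OF QS sn tt(2)] by simp
          qed
        qed
      qed
      have Fy: "F (y @ [b]) = m (Q d') (if b then s d else m g (s d))" for b
      proof -
        have "pf m (h (y @ [b])) d' = Q d'" unfolding Q_def
          by (rule pf_cong) (use y d' in \<open>auto simp: h_def nth_append\<close>)
        moreover have "h (y @ [b]) d = (if b then s d else m g (s d))"
          unfolding h_def low_def using y by (simp add: nth_append)
        ultimately show ?thesis unfolding F_def d' by simp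
      qed
      have gs: "m g (s d) \<in> S" "s d \<in> S" using g KS sS cl by auto
      have a'w: "a' = w d'" unfolding a'_def d' by simp
      have wd: "w d' \<in> S" using wK KS d' by auto
      have gS: "g \<in> S" using g KS by auto
      have "m (w d') (m g (s d)) = m (m (w d') g) (s d)" using as[OF wd gS gs(2)] by simp
      also have "\<dots> = m (w d') (s d)" using g(2) a'w by simp
      finally have "m (w d') (m g (s d)) = m (w d') (s d)" .
      then have "m (Q d') (m g (s d)) = m (Q d') (s d)"
        using C[of d'] j d' gs by (auto simp: less_Suc_eq_le)
      moreover have "Q d' \<in> S" unfolding Q_def
        by (rule pf_S[OF cl]) (use sS lowS d' in auto)
      then have "m (Q d') (s d) \<in> S" using gs cl by blast
      ultimately show "(F (y @ [False]), F (y @ [True])) \<in> \<delta>" using Fy refl by simp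
    qed
    moreover have L: "length \<alpha>s - 1 = d" by (simp add: \<alpha>s_def)
    moreover have FM': "F \<in> M_alg S m \<alpha>s" using FM[of d] unfolding F_def by simp
    moreover have "(\<forall>x. length x = length \<alpha>s - 1 \<and> x \<noteq> replicate (length \<alpha>s - 1) True \<longrightarrow>
          (F (x @ [False]), F (x @ [True])) \<in> \<delta>) \<longrightarrow>
        (F (replicate (length \<alpha>s - 1) True @ [False]), F (replicate (length \<alpha>s - 1) True @ [True])) \<in> \<delta>"
      using tc FM' unfolding term_cond_def by blast
    ultimately show "(F (replicate d True @ [False]), F (replicate d True @ [True])) \<in> \<delta>"
      by simp
  qed
  then have eqF: "F (replicate d True @ [False]) = F (replicate d True @ [True])"
    using sn unfolding supernilpotent_def \<alpha>s_def by auto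
  have "F (replicate d True @ [True]) = x"
    unfolding F_def x by (rule pf_cong) (auto simp: h_def nth_append)
  moreover have "F (replicate d True @ [False]) \<in> K"
  proof (cases d)
    case 0
    then show ?thesis unfolding F_def h_def low_def using gsK by simp
  next
    case (Suc d')
    have "h (replicate d True @ [False]) d = m g (s d)" unfolding h_def low_def by (simp add: nth_append)
    moreover have "pf m (h (replicate d True @ [False])) d' \<in> S"
      by (rule pf_S[OF cl]) (use hS Suc in auto)
    ultimately show ?thesis unfolding F_def Suc using Kl gsK by (simp add: Suc)
  qed
  ultimately show "x \<in> K" using eqF by simp
qed

context group
begin

lemma sg_carrier: "is_semigroup (carrier G) (mult G)"
  unfolding is_semigroup_def by (auto simp: m_assoc)

lemma cl_carrier: "\<forall>a\<in>carrier G. \<forall>b\<in>carrier G. mult G a b \<in> carrier G"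
  by auto

lemma cong_subgroup:
  assumes c: "is_congruence (carrier G) (mult G) \<theta>"
  shows "subgroup {g \<in> carrier G. (g, \<one>) \<in> \<theta>} G"
proof -
  have e: "equiv (carrier G) \<theta>" and cp: "\<And>a b c d. (a, b) \<in> \<theta> \<Longrightarrow> (c, d) \<in> \<theta> \<Longrightarrow> (a \<otimes> c, b \<otimes> d) \<in> \<theta>"
    using c unfolding is_congruence_def by blast+
  have refl: "\<And>z. z \<in> carrier G \<Longrightarrow> (z, z) \<in> \<theta>" using e unfolding equiv_def refl_on_def by blast
  have sym: "\<And>a b. (a, b) \<in> \<theta> \<Longrightarrow> (b, a) \<in> \<theta>" using e unfolding equiv_def sym_def by blast
  show ?thesis
  proof (rule subgroupI)
    show "{g \<in> carrier G. (g, \<one>) \<in> \<theta>} \<subseteq> carrier G" by blast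
    show "{g \<in> carrier G. (g, \<one>) \<in> \<theta>} \<noteq> {}" using refl by blast
  next
    fix a assume a: "a \<in> {g \<in> carrier G. (g, \<one>) \<in> \<theta>}"
    then have "(inv a \<otimes> a, inv a \<otimes> \<one>) \<in> \<theta>" using cp refl by blast
    then show "inv a \<in> {g \<in> carrier G. (g, \<one>) \<in> \<theta>}" using a sym by auto
  next
    fix a b assume "a \<in> {g \<in> carrier G. (g, \<one>) \<in> \<theta>}" "b \<in> {g \<in> carrier G. (g, \<one>) \<in> \<theta>}"
    then show "a \<otimes> b \<in> {g \<in> carrier G. (g, \<one>) \<in> \<theta>}" using cp[of a \<one> b \<one>] by auto
  qed
qed

lemma comm_bin:
  assumes i: "i < 2" and j: "j = 1 - i" and pq: "p \<in> carrier G" "q \<in> carrier G"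
    and P: "(\<one>, p) \<in> [\<alpha>0, \<alpha>1] ! i" "(\<one>, inv p) \<in> [\<alpha>0, \<alpha>1] ! i"
    and Q: "(\<one>, q) \<in> [\<alpha>0, \<alpha>1] ! j" "(\<one>, inv q) \<in> [\<alpha>0, \<alpha>1] ! j"
  shows "(\<one>, p \<otimes> q \<otimes> inv p \<otimes> inv q) \<in> hcomm (carrier G) (mult G) [\<alpha>0, \<alpha>1]"
proof (rule hcomm_intro)
  fix \<delta> assume c: "is_congruence (carrier G) (mult G) \<delta>" and tc: "term_cond (carrier G) (mult G) [\<alpha>0, \<alpha>1] \<delta>"
  have refl: "\<And>z. z \<in> carrier G \<Longrightarrow> (z, z) \<in> \<delta>" using c unfolding is_congruence_def equiv_def refl_on_def by blast
  define F where "F = (\<lambda>x::bool list. (if x ! i then p else \<one>) \<otimes> (if x ! j then q else \<one>)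
     \<otimes> (if x ! i then inv p else \<one>) \<otimes> (if x ! j then inv q else \<one>))"
  have ij: "j < length [\<alpha>0, \<alpha>1]" "i < length [\<alpha>0, \<alpha>1]" using i j by auto
  have "F \<in> M_alg (carrier G) (mult G) [\<alpha>0, \<alpha>1]" unfolding F_def
    by (intro M_alg.prod M_alg.gen ij P Q)
  moreover have "\<forall>x. length x = 1 \<and> x \<noteq> [True] \<longrightarrow> (F (x @ [False]), F (x @ [True])) \<in> \<delta>"
  proof (intro allI impI)
    fix x :: "bool list" assume "length x = 1 \<and> x \<noteq> [True]"
    then have x: "x = [False]" by (cases x) auto
    have "F (x @ [False]) = \<one>" "F (x @ [True]) = \<one>" using i j x pq unfolding F_def
      by (auto simp: less_2_cases_iff)
    then show "(F (x @ [False]), F (x @ [True])) \<in> \<delta>" using refl by simp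
  qed
  ultimately have "(F ([True] @ [False]), F ([True] @ [True])) \<in> \<delta>"
    using tc unfolding term_cond_def by (simp add: numeral_eq_Suc)
  moreover have "F ([True] @ [False]) = \<one>" "F ([True] @ [True]) = p \<otimes> q \<otimes> inv p \<otimes> inv q"
    using i j pq unfolding F_def by (auto simp: less_2_cases_iff)
  ultimately show "(\<one>, p \<otimes> q \<otimes> inv p \<otimes> inv q) \<in> \<delta>" by simp
qed

lemma sym_of: "is_congruence A mm \<theta> \<Longrightarrow> (a, b) \<in> \<theta> \<Longrightarrow> (b, a) \<in> \<theta>"
  unfolding is_congruence_def equiv_def sym_def by blast

lemma pairs_from:
  assumes c: "is_congruence (carrier G) (mult G) \<theta>" and h: "h \<in> carrier G" "(h, \<one>) \<in> \<theta>"
  shows "(\<one>, h) \<in> \<theta>" "(\<one>, inv h) \<in> \<theta>"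
proof -
  show "(\<one>, h) \<in> \<theta>" using sym_of[OF c h(2)] .
  have "inv h \<in> {g \<in> carrier G. (g, \<one>) \<in> \<theta>}"
    using subgroup.m_inv_closed[OF cong_subgroup[OF c]] h by blast
  then show "(\<one>, inv h) \<in> \<theta>" using sym_of[OF c] by blast
qed

lemma derived_group: "\<forall>g\<in>(derived G ^^ k) (carrier G). (g, \<one>) \<in> derived_c (carrier G) (mult G) k"
proof (induction k)
  case 0
  then show ?case by auto
next
  case (Suc k)
  let ?H = "(derived G ^^ k) (carrier G)"
  let ?T = "derived_c (carrier G) (mult G) k"
  have c: "is_congruence (carrier G) (mult G) ?T" using derived_cong[OF sg_carrier] by blast
  have c': "is_congruence (carrier G) (mult G) (derived_c (carrier G) (mult G) (Suc k))"
    using derived_cong[OF sg_carrier] by blast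
  have Hc: "?H \<subseteq> carrier G" using Suc c unfolding is_congruence_def equiv_def by blast
  have "derived_set G ?H \<subseteq> {g \<in> carrier G. (g, \<one>) \<in> derived_c (carrier G) (mult G) (Suc k)}"
  proof
    fix z assume "z \<in> derived_set G ?H"
    then obtain h1 h2 where h: "h1 \<in> ?H" "h2 \<in> ?H" "z = h1 \<otimes> h2 \<otimes> inv h1 \<otimes> inv h2" by blast
    have hc: "h1 \<in> carrier G" "h2 \<in> carrier G" using h Hc by auto
    have p1: "(\<one>, h1) \<in> ?T" "(\<one>, inv h1) \<in> ?T" using pairs_from[OF c hc(1)] Suc h by auto
    have p2: "(\<one>, h2) \<in> ?T" "(\<one>, inv h2) \<in> ?T" using pairs_from[OF c hc(2)] Suc h by auto
    have "(\<one>, z) \<in> hcomm (carrier G) (mult G) [?T, ?T]"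
      unfolding h(3) by (rule comm_bin[of 0 1]) (use hc p1 p2 in auto)
    then show "z \<in> {g \<in> carrier G. (g, \<one>) \<in> derived_c (carrier G) (mult G) (Suc k)}"
      using sym_of[OF c'] h hc by auto
  qed
  then have "derived G ?H \<subseteq> {g \<in> carrier G. (g, \<one>) \<in> derived_c (carrier G) (mult G) (Suc k)}"
    unfolding derived_def by (rule generate_subgroup_incl[OF _ cong_subgroup[OF c']])
  then show ?case by auto
qed

lemma lcs_group: "\<forall>g\<in>gamma G k. (g, \<one>) \<in> lcs (carrier G) (mult G) k"
proof (induction k)
  case 0
  then show ?case by auto
next
  case (Suc k)
  let ?T = "lcs (carrier G) (mult G) k"
  have c: "is_congruence (carrier G) (mult G) ?T" using lcs_cong[OF sg_carrier] by blast
  have c': "is_congruence (carrier G) (mult G) (lcs (carrier G) (mult G) (Suc k))"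
    using lcs_cong[OF sg_carrier] by blast
  have Hc: "gamma G k \<subseteq> carrier G" using Suc c unfolding is_congruence_def equiv_def by blast
  have "{x \<otimes> y \<otimes> inv x \<otimes> inv y | x y. x \<in> gamma G k \<and> y \<in> carrier G}
      \<subseteq> {g \<in> carrier G. (g, \<one>) \<in> lcs (carrier G) (mult G) (Suc k)}"
  proof
    fix z assume "z \<in> {x \<otimes> y \<otimes> inv x \<otimes> inv y | x y. x \<in> gamma G k \<and> y \<in> carrier G}"
    then obtain h1 h2 where h: "h1 \<in> gamma G k" "h2 \<in> carrier G" "z = h1 \<otimes> h2 \<otimes> inv h1 \<otimes> inv h2" by blast
    have hc: "h1 \<in> carrier G" "h2 \<in> carrier G" using h Hc by auto
    have p1: "(\<one>, h1) \<in> ?T" "(\<one>, inv h1) \<in> ?T" using pairs_from[OF c hc(1)] Suc h by auto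
    have "(\<one>, z) \<in> hcomm (carrier G) (mult G) [carrier G \<times> carrier G, ?T]"
      unfolding h(3) by (rule comm_bin[of 1 0]) (use hc p1 in auto)
    then show "z \<in> {g \<in> carrier G. (g, \<one>) \<in> lcs (carrier G) (mult G) (Suc k)}"
      using sym_of[OF c'] h hc by auto
  qed
  then have "gamma G (Suc k) \<subseteq> {g \<in> carrier G. (g, \<one>) \<in> lcs (carrier G) (mult G) (Suc k)}"
    unfolding gamma.simps by (rule generate_subgroup_incl[OF _ cong_subgroup[OF c']])
  then show ?case by auto
qed

lemma rcs_group: "\<forall>g\<in>gamma G k. (g, \<one>) \<in> rcs (carrier G) (mult G) k"
proof (induction k)
  case 0
  then show ?case by auto
next
  case (Suc k)
  let ?T = "rcs (carrier G) (mult G) k"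
  have c: "is_congruence (carrier G) (mult G) ?T" using rcs_cong[OF sg_carrier] by blast
  have c': "is_congruence (carrier G) (mult G) (rcs (carrier G) (mult G) (Suc k))"
    using rcs_cong[OF sg_carrier] by blast
  have Hc: "gamma G k \<subseteq> carrier G" using Suc c unfolding is_congruence_def equiv_def by blast
  have "{x \<otimes> y \<otimes> inv x \<otimes> inv y | x y. x \<in> gamma G k \<and> y \<in> carrier G}
      \<subseteq> {g \<in> carrier G. (g, \<one>) \<in> rcs (carrier G) (mult G) (Suc k)}"
  proof
    fix z assume "z \<in> {x \<otimes> y \<otimes> inv x \<otimes> inv y | x y. x \<in> gamma G k \<and> y \<in> carrier G}"
    then obtain h1 h2 where h: "h1 \<in> gamma G k" "h2 \<in> carrier G" "z = h1 \<otimes> h2 \<otimes> inv h1 \<otimes> inv h2" by blast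
    have hc: "h1 \<in> carrier G" "h2 \<in> carrier G" using h Hc by auto
    have p1: "(\<one>, h1) \<in> ?T" "(\<one>, inv h1) \<in> ?T" using pairs_from[OF c hc(1)] Suc h by auto
    have "(\<one>, z) \<in> hcomm (carrier G) (mult G) [?T, carrier G \<times> carrier G]"
      unfolding h(3) by (rule comm_bin[of 0 1]) (use hc p1 in auto)
    then show "z \<in> {g \<in> carrier G. (g, \<one>) \<in> rcs (carrier G) (mult G) (Suc k)}"
      using sym_of[OF c'] h hc by auto
  qed
  then have "gamma G (Suc k) \<subseteq> {g \<in> carrier G. (g, \<one>) \<in> rcs (carrier G) (mult G) (Suc k)}"
    unfolding gamma.simps by (rule generate_subgroup_incl[OF _ cong_subgroup[OF c']])
  then show ?case by auto
qed

end

context group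
begin

lemma M_inv:
  assumes "f \<in> M_alg (carrier G) (mult G) \<alpha>s" "\<forall>\<alpha>\<in>set \<alpha>s. \<alpha> = carrier G \<times> carrier G"
  shows "(\<lambda>x. inv (f x)) \<in> M_alg (carrier G) (mult G) \<alpha>s"
  using assms(1)
proof (induction rule: M_alg.induct)
  case (gen i a b)
  then have ab: "a \<in> carrier G" "b \<in> carrier G" using assms(2) nth_mem by fastforce+
  have "(\<lambda>x. if x ! i then inv b else inv a) \<in> M_alg (carrier G) (mult G) \<alpha>s"
    by (rule M_alg.gen) (use gen ab assms(2) nth_mem in fastforce)+
  moreover have "(\<lambda>x. inv (if x ! i then b else a)) = (\<lambda>x. if x ! i then inv b else inv a)" by auto
  ultimately show ?case by simp
next
  case (prod f g)
  have v: "\<And>x. f x \<in> carrier G" "\<And>x. g x \<in> carrier G"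
    using M_alg_vals[OF prod.hyps(1) _ cl_carrier] M_alg_vals[OF prod.hyps(2) _ cl_carrier] assms(2)
    by auto
  have "(\<lambda>x. inv (g x) \<otimes> inv (f x)) \<in> M_alg (carrier G) (mult G) \<alpha>s"
    by (rule M_alg.prod) (use prod in auto)
  moreover have "(\<lambda>x. inv (f x \<otimes> g x)) = (\<lambda>x. inv (g x) \<otimes> inv (f x))"
    using v by (auto simp: inv_mult_group)
  ultimately show ?case by simp
qed

definition Pk :: "nat \<Rightarrow> nat \<Rightarrow> 'a set" where
  "Pk d k = {g \<in> carrier G. \<exists>F\<in>M_alg (carrier G) (mult G) (replicate (Suc d) (carrier G \<times> carrier G)).
     (\<forall>x. (\<forall>i\<le>k. x ! i) \<longrightarrow> F x = g) \<and> (\<forall>x. (\<exists>i\<le>k. \<not> x ! i) \<longrightarrow> F x = \<one>)}"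

lemma Pk_subgroup:
  assumes "k \<le> d"
  shows "subgroup (Pk d k) G"
proof (rule subgroupI)
  let ?M = "M_alg (carrier G) (mult G) (replicate (Suc d) (carrier G \<times> carrier G))"
  show "Pk d k \<subseteq> carrier G" unfolding Pk_def by blast
  have "(\<lambda>x::bool list. if x ! 0 then \<one> else \<one>) \<in> ?M" by (rule M_alg.gen) auto
  then have "\<one> \<in> Pk d k" unfolding Pk_def by (intro CollectI conjI one_closed bexI[of _ "\<lambda>x. if x ! 0 then \<one> else \<one>"]) auto
  then show "Pk d k \<noteq> {}" by blast
next
  let ?M = "M_alg (carrier G) (mult G) (replicate (Suc d) (carrier G \<times> carrier G))"
  fix a assume "a \<in> Pk d k"
  then obtain F where a: "a \<in> carrier G" "F \<in> ?M" "\<forall>x. (\<forall>i\<le>k. x ! i) \<longrightarrow> F x = a" "\<forall>x. (\<exists>i\<le>k. \<not> x ! i) \<longrightarrow> F x = \<one>"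
    unfolding Pk_def by blast
  have "(\<lambda>x. inv (F x)) \<in> ?M" by (rule M_inv[OF a(2)]) auto
  then show "inv a \<in> Pk d k" unfolding Pk_def using a by (intro CollectI conjI inv_closed bexI[of _ "\<lambda>x. inv (F x)"]) auto
next
  let ?M = "M_alg (carrier G) (mult G) (replicate (Suc d) (carrier G \<times> carrier G))"
  fix a b assume "a \<in> Pk d k" "b \<in> Pk d k"
  then obtain F F' where a: "a \<in> carrier G" "F \<in> ?M" "\<forall>x. (\<forall>i\<le>k. x ! i) \<longrightarrow> F x = a" "\<forall>x. (\<exists>i\<le>k. \<not> x ! i) \<longrightarrow> F x = \<one>"
    and b: "b \<in> carrier G" "F' \<in> ?M" "\<forall>x. (\<forall>i\<le>k. x ! i) \<longrightarrow> F' x = b" "\<forall>x. (\<exists>i\<le>k. \<not> x ! i) \<longrightarrow> F' x = \<one>"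
    unfolding Pk_def by blast
  have "(\<lambda>x. F x \<otimes> F' x) \<in> ?M" by (rule M_alg.prod[OF a(2) b(2)])
  then show "a \<otimes> b \<in> Pk d k" unfolding Pk_def using a b
    by (intro CollectI conjI m_closed bexI[of _ "\<lambda>x. F x \<otimes> F' x"]) auto
qed

lemma gamma_Pk: "k \<le> d \<Longrightarrow> gamma G k \<subseteq> Pk d k"
proof (induction k)
  case 0
  let ?M = "M_alg (carrier G) (mult G) (replicate (Suc d) (carrier G \<times> carrier G))"
  show ?case
  proof
    fix g assume g: "g \<in> gamma G 0"
    then have gc: "g \<in> carrier G" by simp
    have "(\<lambda>x::bool list. if x ! 0 then g else \<one>) \<in> ?M" by (rule M_alg.gen) (use gc in auto)
    then show "g \<in> Pk d 0" unfolding Pk_def using gc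
      by (intro CollectI conjI bexI[of _ "\<lambda>x. if x ! 0 then g else \<one>"]) auto
  qed
next
  case (Suc k)
  let ?M = "M_alg (carrier G) (mult G) (replicate (Suc d) (carrier G \<times> carrier G))"
  have IH: "gamma G k \<subseteq> Pk d k" using Suc by simp
  have "{x \<otimes> y \<otimes> inv x \<otimes> inv y | x y. x \<in> gamma G k \<and> y \<in> carrier G} \<subseteq> Pk d (Suc k)"
  proof
    fix z assume "z \<in> {x \<otimes> y \<otimes> inv x \<otimes> inv y | x y. x \<in> gamma G k \<and> y \<in> carrier G}"
    then obtain p q where h: "p \<in> gamma G k" "q \<in> carrier G" "z = p \<otimes> q \<otimes> inv p \<otimes> inv q" by blast
    then have "p \<in> Pk d k" using IH by blast
    then obtain F where F: "p \<in> carrier G" "F \<in> ?M" "\<forall>x. (\<forall>i\<le>k. x ! i) \<longrightarrow> F x = p" "\<forall>x. (\<exists>i\<le>k. \<not> x ! i) \<longrightarrow> F x = \<one>"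
      unfolding Pk_def by blast
    define V where "V = (\<lambda>x::bool list. if x ! Suc k then q else \<one>)"
    define V' where "V' = (\<lambda>x::bool list. if x ! Suc k then inv q else \<one>)"
    have VM: "V \<in> ?M" "V' \<in> ?M" unfolding V_def V'_def
      by (rule M_alg.gen; use Suc.prems h in auto)+
    have FiM: "(\<lambda>x. inv (F x)) \<in> ?M" by (rule M_inv[OF F(2)]) auto
    have "(\<lambda>x. F x \<otimes> V x \<otimes> inv (F x) \<otimes> V' x) \<in> ?M"
      by (intro M_alg.prod VM FiM F(2))
    moreover have "\<forall>x. (\<forall>i\<le>Suc k. x ! i) \<longrightarrow> F x \<otimes> V x \<otimes> inv (F x) \<otimes> V' x = z"
      using F h unfolding V_def V'_def by auto
    moreover have "\<forall>x. (\<exists>i\<le>Suc k. \<not> x ! i) \<longrightarrow> F x \<otimes> V x \<otimes> inv (F x) \<otimes> V' x = \<one>"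
    proof (intro allI impI)
      fix x :: "bool list" assume "\<exists>i\<le>Suc k. \<not> x ! i"
      then obtain i where i: "i \<le> Suc k" "\<not> x ! i" by blast
      show "F x \<otimes> V x \<otimes> inv (F x) \<otimes> V' x = \<one>"
      proof (cases "i = Suc k")
        case True
        have Fc: "F x \<in> carrier G" using M_alg_vals[OF F(2) _ cl_carrier] by auto
        show ?thesis using True i Fc unfolding V_def V'_def by simp
      next
        case False
        then have "F x = \<one>" using F(4) i le_Suc_eq by blast
        then show ?thesis using h unfolding V_def V'_def by simp
      qed
    qed
    moreover have "z \<in> carrier G" using h F by simp
    ultimately show "z \<in> Pk d (Suc k)" unfolding Pk_def
      by (intro CollectI conjI bexI[of _ "\<lambda>x. F x \<otimes> V x \<otimes> inv (F x) \<otimes> V' x"]) auto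
  qed
  then show ?case unfolding gamma.simps
    by (rule generate_subgroup_incl[OF _ Pk_subgroup[OF Suc.prems]])
qed

lemma super_group:
  assumes g: "g \<in> gamma G d"
  shows "(\<one>, g) \<in> hcomm (carrier G) (mult G) (replicate (Suc d) (carrier G \<times> carrier G))"
proof (rule hcomm_intro)
  let ?\<alpha>s = "replicate (Suc d) (carrier G \<times> carrier G)"
  fix \<delta> assume c: "is_congruence (carrier G) (mult G) \<delta>" and tc: "term_cond (carrier G) (mult G) ?\<alpha>s \<delta>"
  have refl: "\<And>z. z \<in> carrier G \<Longrightarrow> (z, z) \<in> \<delta>" using c unfolding is_congruence_def equiv_def refl_on_def by blast
  have "g \<in> Pk d d" using gamma_Pk[of d d] g by blast
  then obtain F where F: "F \<in> M_alg (carrier G) (mult G) ?\<alpha>s" "\<forall>x. (\<forall>i\<le>d. x ! i) \<longrightarrow> F x = g" "\<forall>x. (\<exists>i\<le>d. \<not> x ! i) \<longrightarrow> F x = \<one>"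
    unfolding Pk_def by blast
  have L: "length ?\<alpha>s - 1 = d" by simp
  have H: "\<forall>x. length x = d \<and> x \<noteq> replicate d True \<longrightarrow> (F (x @ [False]), F (x @ [True])) \<in> \<delta>"
  proof (intro allI impI)
    fix y :: "bool list" assume y: "length y = d \<and> y \<noteq> replicate d True"
    have "\<exists>j<d. \<not> y ! j"
    proof (rule ccontr)
      assume "\<not> (\<exists>j<d. \<not> y ! j)"
      then have "\<And>i. i < length y \<Longrightarrow> y ! i = replicate d True ! i" using y by simp
      then have "y = replicate d True" using y by (intro nth_equalityI) simp_all
      then show False using y by blast
    qed
    then obtain j where j: "j < d" "\<not> y ! j" by blast
    have "\<And>b. \<not> (y @ [b]) ! j" using j y by (simp add: nth_append)
    then have "\<And>b. F (y @ [b]) = \<one>" using F(3) j by (meson less_imp_le)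
    then show "(F (y @ [False]), F (y @ [True])) \<in> \<delta>" using refl by simp
  qed
  have "(\<forall>x. length x = length ?\<alpha>s - 1 \<and> x \<noteq> replicate (length ?\<alpha>s - 1) True \<longrightarrow>
          (F (x @ [False]), F (x @ [True])) \<in> \<delta>) \<longrightarrow>
        (F (replicate (length ?\<alpha>s - 1) True @ [False]), F (replicate (length ?\<alpha>s - 1) True @ [True])) \<in> \<delta>"
    using tc F(1) unfolding term_cond_def by blast
  then have "(F (replicate d True @ [False]), F (replicate d True @ [True])) \<in> \<delta>" using H L by simp
  moreover have "F (replicate d True @ [False]) = \<one>"
    using F(3) by (metis le_refl length_replicate nth_append_length)
  moreover have "F (replicate d True @ [True]) = g"
    using F(2) by (auto simp: nth_append)
  ultimately show "(\<one>, g) \<in> \<delta>" by simp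
qed

end

lemma sub_sg:
  assumes "is_semigroup S m" "T \<subseteq> S" "\<forall>a\<in>T. \<forall>b\<in>T. m a b \<in> T"
  shows "is_semigroup T m"
  using assms unfolding is_semigroup_def by blast

lemma two_sub: "[a, b] ! i \<subseteq> [c, d] ! i" if "a \<subseteq> c" "b \<subseteq> d" "i < 2" for a b c d :: "'x set"
  using that by (auto simp: less_2_cases_iff)

context
  fixes S T :: "'a set" and m
  assumes sg: "is_semigroup S m" and TS: "T \<subseteq> S" and cT: "\<forall>a\<in>T. \<forall>b\<in>T. m a b \<in> T"
begin

lemma sgT: "is_semigroup T m" using sub_sg[OF sg TS cT] .

lemma derived_mono: "derived_c T m k \<subseteq> derived_c S m k"
proof (induction k)
  case 0
  then show ?case using TS by auto
next
  case (Suc k)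
  have "derived_c T m k \<subseteq> T \<times> T" using derived_cong[OF sgT] by blast
  moreover have "\<forall>i<length [derived_c S m k, derived_c S m k].
     [derived_c T m k, derived_c T m k] ! i \<subseteq> [derived_c S m k, derived_c S m k] ! i"
    using two_sub[OF Suc Suc] by simp
  ultimately show ?case
    by (simp only: derived_c.simps, intro hcomm_mono[OF TS cT]) auto
qed

lemma lcs_mono: "lcs T m k \<subseteq> lcs S m k"
proof (induction k)
  case 0
  then show ?case using TS by auto
next
  case (Suc k)
  have "lcs T m k \<subseteq> T \<times> T" using lcs_cong[OF sgT] by blast
  moreover have "T \<times> T \<subseteq> S \<times> S" using TS by auto
  then have "\<forall>i<length [S \<times> S, lcs S m k]. [T \<times> T, lcs T m k] ! i \<subseteq> [S \<times> S, lcs S m k] ! i"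
    using two_sub[OF _ Suc] by simp
  ultimately show ?case
    by (simp only: lcs.simps, intro hcomm_mono[OF TS cT]) auto
qed

lemma rcs_mono: "rcs T m k \<subseteq> rcs S m k"
proof (induction k)
  case 0
  then show ?case using TS by auto
next
  case (Suc k)
  have "rcs T m k \<subseteq> T \<times> T" using rcs_cong[OF sgT] by blast
  moreover have "T \<times> T \<subseteq> S \<times> S" using TS by auto
  then have "\<forall>i<length [rcs S m k, S \<times> S]. [rcs T m k, T \<times> T] ! i \<subseteq> [rcs S m k, S \<times> S] ! i"
    using two_sub[OF Suc] by simp
  ultimately show ?case
    by (simp only: rcs.simps, intro hcomm_mono[OF TS cT]) auto
qed

lemma super_mono: "hcomm T m (replicate (Suc d) (T \<times> T)) \<subseteq> hcomm S m (replicate (Suc d) (S \<times> S))"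
proof (intro hcomm_mono[OF TS cT])
  show "\<forall>i<length (replicate (Suc d) (S \<times> S)). replicate (Suc d) (T \<times> T) ! i \<subseteq> replicate (Suc d) (S \<times> S) ! i"
    using TS by (simp del: replicate_Suc add: nth_replicate) blast
qed (simp_all del: replicate_Suc)

end

lemma one_derived: "group G \<Longrightarrow> \<one>\<^bsub>G\<^esub> \<in> (derived G ^^ d) (carrier G)"
  by (cases d) (auto simp: derived_def intro: generate.one group.is_monoid monoid.one_closed)

lemma one_gamma: "group G \<Longrightarrow> \<one>\<^bsub>G\<^esub> \<in> gamma G d"
  by (cases d) (auto intro: generate.one group.is_monoid monoid.one_closed)

theorem lemma3p1:
  fixes S K :: "'a set" and m :: "'a \<Rightarrow> 'a \<Rightarrow> 'a" and d :: nat
  assumes "is_semigroup S m"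
    and "is_ideal S m K"
    and "completely_simple K m"
  shows "(d_solvable S m d \<longrightarrow>
            spow S m (2 ^ d) = K \<and> (\<forall>G. sg_subgroup K m G \<longrightarrow> group_d_solvable G d))
       \<and> ((left_nilpotent S m d \<or> right_nilpotent S m d \<or> supernilpotent S m d) \<longrightarrow>
            spow S m (d + 1) = K \<and> (\<forall>G. sg_subgroup K m G \<longrightarrow> group_d_nilpotent G d))"
proof -
  note sg = assms(1) and I = assms(2) and cs = assms(3)
  have KS: "K \<subseteq> S" using I unfolding is_ideal_def by blast
  have Gfacts: "group G \<and> carrier G \<subseteq> S \<and> mult G = m \<and> (\<forall>a\<in>carrier G. \<forall>b\<in>carrier G. m a b \<in> carrier G)"
    if "sg_subgroup K m G" for G :: "'a monoid"
    using that KS unfolding sg_subgroup_def by (auto intro: group.cl_carrier[rule_format])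
  have P1: "d_solvable S m d \<longrightarrow>
            spow S m (2 ^ d) = K \<and> (\<forall>G. sg_subgroup K m G \<longrightarrow> group_d_solvable G d)"
  proof
    assume ds: "d_solvable S m d"
    have "spow S m (2 ^ d) \<subseteq> K"
    proof
      fix x assume "x \<in> spow S m (2 ^ d)"
      then obtain y where "y \<in> K" "(x, y) \<in> derived_c S m d" using sol_claim[OF sg I cs] by blast
      then show "x \<in> K" using ds unfolding d_solvable_def by auto
    qed
    moreover have "K \<subseteq> spow S m (2 ^ d)" using K_sub_spow[OF sg I cs] by simp
    moreover have "group_d_solvable G d" if G: "sg_subgroup K m G" for G
    proof -
      have g: "group G" "carrier G \<subseteq> S" "mult G = m" "\<forall>a\<in>carrier G. \<forall>b\<in>carrier G. m a b \<in> carrier G"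
        using Gfacts[OF G] by auto
      have "(derived G ^^ d) (carrier G) \<subseteq> {\<one>\<^bsub>G\<^esub>}"
      proof
        fix z assume "z \<in> (derived G ^^ d) (carrier G)"
        then have "(z, \<one>\<^bsub>G\<^esub>) \<in> derived_c (carrier G) m d" using group.derived_group[OF g(1)] g(3) by blast
        then have "(z, \<one>\<^bsub>G\<^esub>) \<in> derived_c S m d" using derived_mono[OF sg g(2) g(4)] by blast
        then show "z \<in> {\<one>\<^bsub>G\<^esub>}" using ds unfolding d_solvable_def by auto
      qed
      then show ?thesis unfolding group_d_solvable_def using one_derived[OF g(1)] by blast
    qed
    ultimately show "spow S m (2 ^ d) = K \<and> (\<forall>G. sg_subgroup K m G \<longrightarrow> group_d_solvable G d)" by blast
  qed
  have P2: "(left_nilpotent S m d \<or> right_nilpotent S m d \<or> supernilpotent S m d) \<longrightarrow>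
            spow S m (d + 1) = K \<and> (\<forall>G. sg_subgroup K m G \<longrightarrow> group_d_nilpotent G d)"
  proof
    assume nil: "left_nilpotent S m d \<or> right_nilpotent S m d \<or> supernilpotent S m d"
    have "spow S m (Suc d) \<subseteq> K"
    proof (cases "supernilpotent S m d")
      case True
      then show ?thesis using super_claim[OF sg I cs] by blast
    next
      case False
      show ?thesis
      proof
        fix x assume x: "x \<in> spow S m (Suc d)"
        show "x \<in> K"
        proof (cases "left_nilpotent S m d")
          case True
          then obtain y where "y \<in> K" "(x, y) \<in> lcs S m d" using lcs_claim[OF sg I cs] x by blast
          then show ?thesis using True unfolding left_nilpotent_def by auto
        next
          case False
          then have rn: "right_nilpotent S m d" using nil \<open>\<not> supernilpotent S m d\<close> by blast
          obtain y where "y \<in> K" "(x, y) \<in> rcs S m d" using rcs_claim[OF sg I cs] x by blast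
          then show ?thesis using rn unfolding right_nilpotent_def by auto
        qed
      qed
    qed
    moreover have "K \<subseteq> spow S m (Suc d)" using K_sub_spow[OF sg I cs] by simp
    moreover have "group_d_nilpotent G d" if G: "sg_subgroup K m G" for G
    proof -
      have g: "group G" "carrier G \<subseteq> S" "mult G = m" "\<forall>a\<in>carrier G. \<forall>b\<in>carrier G. m a b \<in> carrier G"
        using Gfacts[OF G] by auto
      have "gamma G d \<subseteq> {\<one>\<^bsub>G\<^esub>}"
      proof
        fix z assume z: "z \<in> gamma G d"
        have "(z, \<one>\<^bsub>G\<^esub>) \<in> Id_on S \<or> (\<one>\<^bsub>G\<^esub>, z) \<in> Id_on S"
        proof (cases "left_nilpotent S m d")
          case True
          have "(z, \<one>\<^bsub>G\<^esub>) \<in> lcs (carrier G) m d" using group.lcs_group[OF g(1)] g(3) z by blast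
          then have "(z, \<one>\<^bsub>G\<^esub>) \<in> lcs S m d" using lcs_mono[OF sg g(2) g(4)] by blast
          then show ?thesis using True unfolding left_nilpotent_def by auto
        next
          case ln: False
          show ?thesis
          proof (cases "right_nilpotent S m d")
            case True
            have "(z, \<one>\<^bsub>G\<^esub>) \<in> rcs (carrier G) m d" using group.rcs_group[OF g(1)] g(3) z by blast
            then have "(z, \<one>\<^bsub>G\<^esub>) \<in> rcs S m d" using rcs_mono[OF sg g(2) g(4)] by blast
            then show ?thesis using True unfolding right_nilpotent_def by auto
          next
            case False
            then have sn: "supernilpotent S m d" using nil ln by blast
            have "(\<one>\<^bsub>G\<^esub>, z) \<in> hcomm (carrier G) m (replicate (Suc d) (carrier G \<times> carrier G))"
              using group.super_group[OF g(1) z] g(3) by blast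
            then have "(\<one>\<^bsub>G\<^esub>, z) \<in> hcomm S m (replicate (Suc d) (S \<times> S))"
              using super_mono[OF sg g(2) g(4)] by blast
            then show ?thesis using sn unfolding supernilpotent_def by auto
          qed
        qed
        then show "z \<in> {\<one>\<^bsub>G\<^esub>}" by auto
      qed
      then show ?thesis unfolding group_d_nilpotent_def using one_gamma[OF g(1)] by blast
    qed
    ultimately show "spow S m (d + 1) = K \<and> (\<forall>G. sg_subgroup K m G \<longrightarrow> group_d_nilpotent G d)" by auto
  qed
  show ?thesis using P1 P2 by blast
qed

end
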